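(* Let $\varepsilon,\delta>0$, $k\in\mathbb N$, let $\mathcal A$ and $\mathcal B$ be distributions over domains $X_A$ and $X_B$ respectively, and let $f:X_A\times X_B\to[0,1]$. Suppose there exists a coupling of $a_1,\dots,a_k$ i.i.d. from $\mathcal A$ and $b_1,\dots,b_k$ i.i.d. from $\mathcal B$ for which $$\Pr\!\left[\sum_{i\in[k]}f(a_i,b_i)\ge\varepsilon k+\sqrt{2k\ln(1/\delta)}\right]\ge\delta.$$ Then there is a coupling of $a\sim\mathcal A$ and $b\sim\mathcal B$ for which $\mathbb E[f(a,b)]\ge\varepsilon$.
   Context: A coupling of two (joint) distributions is a joint distribution on the product space whose marginals are the given distributions; here the $a_i$ are jointly i.i.d. from $\mathcal A$ and the $b_i$ are jointly i.i.d. from $\mathcal B$, with arbitrary dependence between the two families. *)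

theory Defs
  imports "HOL-Probability.Probability"
begin

definition is_coupling :: "('a \<times> 'b) pmf \<Rightarrow> 'a pmf \<Rightarrow> 'b pmf \<Rightarrow> bool" where
  "is_coupling \<mu> P Q \<longleftrightarrow> map_pmf fst \<mu> = P \<and> map_pmf snd \<mu> = Q"

end

theory Submission
  imports Defs
begin
no_notation Infinite_Sum.abs_summable_on (infixr \<open>abs'_summable'_on\<close> 46)

lemma infsetsum_fin_supp:
  fixes g :: "'c \<Rightarrow> real"
  assumes "finite X" "\<And>x. x \<notin> X \<Longrightarrow> g x = 0"
  shows "g abs_summable_on UNIV" "infsetsum g UNIV = sum g X"
proof -
  have "g abs_summable_on UNIV \<longleftrightarrow> g abs_summable_on X"
    by (rule abs_summable_on_cong_neutral) (use assms in auto)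
  then show "g abs_summable_on UNIV" using assms by simp
  have "infsetsum g UNIV = infsetsum g X"
    by (rule infsetsum_cong_neutral) (use assms in auto)
  then show "infsetsum g UNIV = sum g X" using assms by simp
qed

lemma coupling_rows:
  assumes "is_coupling \<pi> A B"
  shows "(\<lambda>b. pmf \<pi> (a,b)) abs_summable_on UNIV"
        "infsetsum (\<lambda>b. pmf \<pi> (a,b)) UNIV = pmf A a"
proof -
  have inj: "inj_on (Pair a) UNIV" by (auto simp: inj_on_def)
  have e: "fst -` {a} = Pair a ` UNIV" by auto
  show "(\<lambda>b. pmf \<pi> (a,b)) abs_summable_on UNIV"
    using abs_summable_on_reindex_iff[OF inj, of "pmf \<pi>"] by auto
  have "pmf A a = pmf (map_pmf fst \<pi>) a" using assms by (simp add: is_coupling_def)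
  also have "\<dots> = infsetsum (pmf \<pi>) (Pair a ` UNIV)"
    by (simp add: pmf_map measure_pmf_conv_infsetsum e)
  also have "\<dots> = infsetsum (\<lambda>b. pmf \<pi> (a,b)) UNIV"
    by (rule infsetsum_reindex[OF inj])
  finally show "infsetsum (\<lambda>b. pmf \<pi> (a,b)) UNIV = pmf A a" by simp
qed

lemma coupling_cols:
  assumes "is_coupling \<pi> A B"
  shows "(\<lambda>a. pmf \<pi> (a,b)) abs_summable_on UNIV"
        "infsetsum (\<lambda>a. pmf \<pi> (a,b)) UNIV = pmf B b"
proof -
  have inj: "inj_on (\<lambda>a. (a,b)) UNIV" by (auto simp: inj_on_def)
  have e: "snd -` {b} = (\<lambda>a. (a,b)) ` UNIV" by auto
  show "(\<lambda>a. pmf \<pi> (a,b)) abs_summable_on UNIV"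
    using abs_summable_on_reindex_iff[OF inj, of "pmf \<pi>"] by auto
  have "pmf B b = pmf (map_pmf snd \<pi>) b" using assms by (simp add: is_coupling_def)
  also have "\<dots> = infsetsum (pmf \<pi>) ((\<lambda>a. (a,b)) ` UNIV)"
    by (simp add: pmf_map measure_pmf_conv_infsetsum e)
  also have "\<dots> = infsetsum (\<lambda>a. pmf \<pi> (a,b)) UNIV"
    by (rule infsetsum_reindex[OF inj])
  finally show "infsetsum (\<lambda>a. pmf \<pi> (a,b)) UNIV = pmf B b" by simp
qed

lemma infsetsum_nonneg_zero:
  fixes g :: "'c \<Rightarrow> real"
  assumes "g abs_summable_on UNIV" "\<And>x. g x \<ge> 0" "infsetsum g UNIV = 0"
  shows "g x = 0"
proof -
  have "infsetsum g {x} \<le> infsetsum g UNIV"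
    by (rule infsetsum_mono_neutral_left) (use assms in auto)
  then show ?thesis using assms(2)[of x] assms(3) by simp
qed

lemma embed_coupling:
  fixes q :: "'a \<times> 'b \<Rightarrow> real"
  assumes nn: "\<And>x. q x \<ge> 0"
    and rs: "\<And>a. (\<lambda>b. q (a,b)) abs_summable_on UNIV"
    and rsum: "\<And>a. infsetsum (\<lambda>b. q (a,b)) UNIV = pmf A a"
    and cs: "\<And>b. (\<lambda>a. q (a,b)) abs_summable_on UNIV"
    and csum: "\<And>b. infsetsum (\<lambda>a. q (a,b)) UNIV = pmf B b"
  shows "\<exists>\<nu>. is_coupling \<nu> A B \<and> (\<forall>x. pmf \<nu> x = q x)"
proof -
  let ?SA = "set_pmf A" and ?SB = "set_pmf B"
  have z: "q (a,b) = 0" if "a \<notin> ?SA \<or> b \<notin> ?SB" for a b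
  proof (cases "a \<notin> ?SA")
    case True
    then have "infsetsum (\<lambda>b. q (a,b)) UNIV = 0" using rsum by (simp add: set_pmf_eq)
    then show ?thesis using infsetsum_nonneg_zero[OF rs] nn by blast
  next
    case False
    then have "b \<notin> ?SB" using that by auto
    then have "infsetsum (\<lambda>a. q (a,b)) UNIV = 0" using csum by (simp add: set_pmf_eq)
    then show ?thesis using infsetsum_nonneg_zero[OF cs] nn by blast
  qed
  have cA: "countable ?SA" and cB: "countable ?SB" by auto
  have rs': "(\<lambda>b. q (a,b)) abs_summable_on ?SB" for a
    using rs abs_summable_on_subset by blast
  have rsum': "infsetsum (\<lambda>b. q (a,b)) ?SB = pmf A a" for a
  proof -
    have "infsetsum (\<lambda>b. q (a,b)) ?SB = infsetsum (\<lambda>b. q (a,b)) UNIV"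
      by (rule infsetsum_cong_neutral) (use z in auto)
    then show ?thesis using rsum by simp
  qed
  have sumS: "q abs_summable_on (?SA \<times> ?SB)"
    by (subst abs_summable_on_Sigma_iff) (use cA cB rs' nn rsum' in auto)
  have sumU: "q abs_summable_on UNIV"
    using sumS by (subst abs_summable_on_cong_neutral[where B = "?SA \<times> ?SB" and g = q]) (use z in auto)
  have "infsetsum q UNIV = infsetsum q (?SA \<times> ?SB)"
    by (rule infsetsum_cong_neutral) (use z in auto)
  also have "\<dots> = infsetsum (\<lambda>a. infsetsum (\<lambda>b. q (a,b)) ?SB) ?SA"
    by (rule infsetsum_Sigma) (use cA cB sumS in auto)
  also have "\<dots> = infsetsum (pmf A) ?SA" using rsum' by simp
  also have "\<dots> = 1" by (simp add: infsetsum_pmf_eq_1)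
  finally have tot: "infsetsum q UNIV = 1" .
  have nint: "(\<integral>\<^sup>+ x. ennreal (q x) \<partial>count_space UNIV) = 1"
    using nn_integral_conv_infsetsum[OF sumU] nn tot by simp
  define \<nu> where "\<nu> = embed_pmf q"
  have p: "pmf \<nu> x = q x" for x unfolding \<nu>_def by (rule pmf_embed_pmf[OF nn nint])
  have "map_pmf fst \<nu> = A"
  proof (rule pmf_eqI)
    fix a :: 'a
    have inj: "inj_on (Pair a) UNIV" by (auto simp: inj_on_def)
    have e: "fst -` {a} = Pair a ` UNIV" by auto
    have "pmf (map_pmf fst \<nu>) a = infsetsum (pmf \<nu>) (Pair a ` UNIV)"
      by (simp add: pmf_map measure_pmf_conv_infsetsum e)
    also have "\<dots> = infsetsum (\<lambda>b. q (a,b)) UNIV"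
      by (subst infsetsum_reindex[OF inj]) (simp add: p)
    finally show "pmf (map_pmf fst \<nu>) a = pmf A a" using rsum by simp
  qed
  moreover have "map_pmf snd \<nu> = B"
  proof (rule pmf_eqI)
    fix b :: 'b
    have inj: "inj_on (\<lambda>a. (a,b)) UNIV" by (auto simp: inj_on_def)
    have e: "snd -` {b} = (\<lambda>a. (a,b)) ` UNIV" by auto
    have "pmf (map_pmf snd \<nu>) b = infsetsum (pmf \<nu>) ((\<lambda>a. (a,b)) ` UNIV)"
      by (simp add: pmf_map measure_pmf_conv_infsetsum e)
    also have "\<dots> = infsetsum (\<lambda>a. q (a,b)) UNIV"
      by (subst infsetsum_reindex[OF inj]) (simp add: p)
    finally show "pmf (map_pmf snd \<nu>) b = pmf B b" using csum by simp
  qed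
  ultimately show ?thesis using p by (auto simp: is_coupling_def)
qed

definition cnt :: "'c list \<Rightarrow> 'c \<Rightarrow> real" where
  "cnt L x = sum_list (map (\<lambda>y. if y = x then 1 else 0) L)"

lemma cnt_Nil[simp]: "cnt [] x = 0" and cnt_Cons[simp]: "cnt (y # L) x = (if y = x then 1 else 0) + cnt L x"
  by (simp_all add: cnt_def)

lemma cnt_nonneg: "cnt L x \<ge> 0"
  by (induction L) auto

lemma cnt_le_length: "cnt L x \<le> real (length L)"
  by (induction L) auto

lemma cnt_zero: "x \<notin> set L \<Longrightarrow> cnt L x = 0"
  by (induction L) auto

lemma rowcnt:
  assumes "finite X" "snd ` set L \<subseteq> X"
  shows "(\<Sum>b\<in>X. cnt L (a,b)) = sum_list (map (\<lambda>s. if fst s = a then 1 else 0) L)"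
  using assms(2)
proof (induction L)
  case (Cons y L)
  have "(\<Sum>b\<in>X. (if y = (a,b) then 1 else 0 :: real)) = (if fst y = a then 1 else 0)"
  proof (cases "fst y = a")
    case True
    then have "(\<Sum>b\<in>X. (if y = (a,b) then 1 else 0 :: real)) = (\<Sum>b\<in>X. (if b = snd y then 1 else 0))"
      by (intro sum.cong) (auto simp: prod_eq_iff)
    also have "\<dots> = 1" using Cons.prems assms(1) by simp
    finally show ?thesis using True by simp
  qed (auto simp: prod_eq_iff)
  then show ?case using Cons by (simp add: sum.distrib)
qed simp

lemma colcnt:
  assumes "finite X" "fst ` set L \<subseteq> X"
  shows "(\<Sum>a\<in>X. cnt L (a,b)) = sum_list (map (\<lambda>s. if snd s = b then 1 else 0) L)"
  using assms(2)
proof (induction L)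
  case (Cons y L)
  have "(\<Sum>a\<in>X. (if y = (a,b) then 1 else 0 :: real)) = (if snd y = b then 1 else 0)"
  proof (cases "snd y = b")
    case True
    then have "(\<Sum>a\<in>X. (if y = (a,b) then 1 else 0 :: real)) = (\<Sum>a\<in>X. (if a = fst y then 1 else 0))"
      by (intro sum.cong) (auto simp: prod_eq_iff)
    also have "\<dots> = 1" using Cons.prems assms(1) by simp
    finally show ?thesis using True by simp
  qed (auto simp: prod_eq_iff)
  then show ?case using Cons by (simp add: sum.distrib)
qed simp

lemma sumcnt:
  assumes "finite X" "set L \<subseteq> X"
  shows "(\<Sum>x\<in>X. cnt L x * F x) = sum_list (map F L)"
  using assms(2)
proof (induction L)
  case (Cons y L)
  have "(\<Sum>x\<in>X. (if y = x then 1 else 0) * F x) = (\<Sum>x\<in>X. if y = x then F x else 0)"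
    by (intro sum.cong) auto
  also have "\<dots> = F y" using Cons.prems assms(1) by simp
  finally have "(\<Sum>x\<in>X. (if y = x then 1 else 0) * F x) = F y" .
  then show ?case using Cons by (simp add: sum.distrib distrib_right)
qed simp

lemma perturb:
  fixes F :: "'a \<times> 'b \<Rightarrow> real"
  assumes cp: "is_coupling \<pi> A B"
    and opt: "\<And>\<nu>. is_coupling \<nu> A B \<Longrightarrow> measure_pmf.expectation \<nu> F \<le> measure_pmf.expectation \<pi> F"
    and Fb: "\<And>x. \<bar>F x\<bar> \<le> 1"
    and CS: "set C \<subseteq> set_pmf \<pi>"
    and rowC: "\<And>a. sum_list (map (\<lambda>s. if fst s = a then 1 else 0) S) = (sum_list (map (\<lambda>s. if fst s = a then 1 else 0) C) :: real)"
    and colC: "\<And>b. sum_list (map (\<lambda>s. if snd s = b then 1 else 0) S) = (sum_list (map (\<lambda>s. if snd s = b then 1 else 0) C) :: real)"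
  shows "sum_list (map F S) \<le> sum_list (map F C)"
proof (cases "C = []")
  case True
  have "S = []"
  proof (rule ccontr)
    assume "S \<noteq> []"
    then obtain s S' where "S = s # S'" by (cases S) auto
    then have "sum_list (map (\<lambda>s'. if fst s' = fst s then 1 else 0) S) \<ge> (1::real)"
      by (auto intro!: sum_list_nonneg)
    then show False using rowC[of "fst s"] True by simp
  qed
  then show ?thesis using True by simp
next
  case False
  define m where "m = Min (pmf \<pi> ` set C)"
  define n where "n = real (length C)"
  have npos: "n > 0" using False by (simp add: n_def)
  have mpos: "m > 0" unfolding m_def using False CS
    by (subst Min_gr_iff) (auto simp: set_pmf_eq')
  have mle: "m \<le> pmf \<pi> x" if "x \<in> set C" for x
    unfolding m_def using that by auto
  define t where "t = m / n"
  have tpos: "t > 0" using mpos npos by (simp add: t_def)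
  define D where "D x = cnt S x - cnt C x" for x
  define q where "q x = pmf \<pi> x + t * D x" for x
  define X where "X = set S \<union> set C"
  have finX: "finite X" by (simp add: X_def)
  have Dz: "D x = 0" if "x \<notin> X" for x
    using that by (simp add: D_def X_def cnt_zero)
  have qnn: "q x \<ge> 0" for x
  proof (cases "x \<in> set C")
    case True
    have "t * cnt C x \<le> t * n" using tpos cnt_le_length[of C x] by (simp add: n_def)
    also have "\<dots> = m" using npos by (simp add: t_def)
    finally have "t * cnt C x \<le> pmf \<pi> x" using mle[OF True] by simp
    then show ?thesis using cnt_nonneg[of S x] tpos
      by (simp add: q_def D_def algebra_simps) (smt (verit) mult_nonneg_nonneg)
  next
    case False
    then show ?thesis using cnt_nonneg[of S x] tpos by (simp add: q_def D_def cnt_zero)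
  qed
  have Drow: "(\<lambda>b. D (a,b)) abs_summable_on UNIV \<and> infsetsum (\<lambda>b. D (a,b)) UNIV = 0" for a
  proof -
    have fin: "finite (snd ` X)" using finX by simp
    have z: "D (a,b) = 0" if "b \<notin> snd ` X" for b using that Dz by force
    have "infsetsum (\<lambda>b. D (a,b)) UNIV = (\<Sum>b\<in>snd ` X. D (a,b))"
      by (rule infsetsum_fin_supp[OF fin z])
    also have "\<dots> = 0"
      unfolding D_def sum_subtractf
      by (subst rowcnt, use fin X_def in auto)+ (use rowC in simp)
    finally show ?thesis using infsetsum_fin_supp(1)[OF fin z] by simp
  qed
  have Dcol: "(\<lambda>a. D (a,b)) abs_summable_on UNIV \<and> infsetsum (\<lambda>a. D (a,b)) UNIV = 0" for b
  proof -
    have fin: "finite (fst ` X)" using finX by simp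
    have z: "D (a,b) = 0" if "a \<notin> fst ` X" for a using that Dz by force
    have "infsetsum (\<lambda>a. D (a,b)) UNIV = (\<Sum>a\<in>fst ` X. D (a,b))"
      by (rule infsetsum_fin_supp[OF fin z])
    also have "\<dots> = 0"
      unfolding D_def sum_subtractf
      by (subst colcnt, use fin X_def in auto)+ (use colC in simp)
    finally show ?thesis using infsetsum_fin_supp(1)[OF fin z] by simp
  qed
  have "\<exists>\<nu>. is_coupling \<nu> A B \<and> (\<forall>x. pmf \<nu> x = q x)"
  proof (rule embed_coupling)
    show "q x \<ge> 0" for x by (rule qnn)
    show "(\<lambda>b. q (a,b)) abs_summable_on UNIV" for a
      unfolding q_def using coupling_rows(1)[OF cp] Drow by (intro abs_summable_on_add abs_summable_on_cmult_right) auto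
    show "infsetsum (\<lambda>b. q (a,b)) UNIV = pmf A a" for a
      unfolding q_def using coupling_rows[OF cp] Drow
      by (subst infsetsum_add) (auto simp: infsetsum_cmult_right intro!: abs_summable_on_cmult_right)
    show "(\<lambda>a. q (a,b)) abs_summable_on UNIV" for b
      unfolding q_def using coupling_cols(1)[OF cp] Dcol by (intro abs_summable_on_add abs_summable_on_cmult_right) auto
    show "infsetsum (\<lambda>a. q (a,b)) UNIV = pmf B b" for b
      unfolding q_def using coupling_cols[OF cp] Dcol
      by (subst infsetsum_add) (auto simp: infsetsum_cmult_right intro!: abs_summable_on_cmult_right)
  qed
  then obtain \<nu> where \<nu>: "is_coupling \<nu> A B" "\<And>x. pmf \<nu> x = q x" by blast
  have s1: "(\<lambda>x. pmf \<pi> x * F x) abs_summable_on UNIV"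
    by (rule abs_summable_on_comparison_test[OF pmf_abs_summable[of \<pi> UNIV]])
       (use Fb in \<open>auto simp: abs_mult intro: mult_left_le\<close>)
  have DF: "infsetsum (\<lambda>x. D x * F x) UNIV = (\<Sum>x\<in>X. D x * F x)"
    by (rule infsetsum_fin_supp(2)[OF finX]) (use Dz in auto)
  have s3: "(\<lambda>x. D x * F x) abs_summable_on UNIV"
    by (intro infsetsum_fin_supp(1)[OF finX]) (use Dz in auto)
  have s2: "(\<lambda>x. t * (D x * F x)) abs_summable_on UNIV"
    by (intro abs_summable_on_cmult_right s3)
  have s4: "infsetsum (\<lambda>x. t * (D x * F x)) UNIV = t * infsetsum (\<lambda>x. D x * F x) UNIV"
    by (rule infsetsum_cmult_right) (rule s3)
  have "measure_pmf.expectation \<nu> F = infsetsum (\<lambda>x. q x * F x) UNIV"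
    by (simp add: pmf_expectation_eq_infsetsum \<nu>(2))
  also have "\<dots> = infsetsum (\<lambda>x. pmf \<pi> x * F x + t * (D x * F x)) UNIV"
    by (simp add: q_def algebra_simps)
  also have "\<dots> = measure_pmf.expectation \<pi> F + t * (\<Sum>x\<in>X. D x * F x)"
    by (subst infsetsum_add[OF s1 s2]) (simp add: pmf_expectation_eq_infsetsum s4 DF)
  also have "(\<Sum>x\<in>X. D x * F x) = sum_list (map F S) - sum_list (map F C)"
    unfolding D_def left_diff_distrib sum_subtractf
    by (subst sumcnt, use finX X_def in auto)+
  finally have "measure_pmf.expectation \<pi> F + t * (sum_list (map F S) - sum_list (map F C)) \<le> measure_pmf.expectation \<pi> F"
    using opt[OF \<nu>(1)] by simp
  then have "t * (sum_list (map F S) - sum_list (map F C)) \<le> 0" by simp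
  then show ?thesis using tpos by (simp add: mult_le_0_iff)
qed

fun wch :: "('a \<Rightarrow> 'b \<Rightarrow> real) \<Rightarrow> 'a \<Rightarrow> 'b \<Rightarrow> 'a \<Rightarrow> ('a \<times> 'b) list \<Rightarrow> real" where
  "wch f a0 b0 x [] = f x b0 - f a0 b0"
| "wch f a0 b0 x ((a,b) # L) = f x b - f a b + wch f a0 b0 a L"

fun spts :: "'b \<Rightarrow> 'a \<Rightarrow> ('a \<times> 'b) list \<Rightarrow> ('a \<times> 'b) list" where
  "spts b0 x [] = [(x,b0)]"
| "spts b0 x ((a,b) # L) = (x,b) # spts b0 a L"

lemma wch_eq: "wch f a0 b0 x L = sum_list (map (case_prod f) (spts b0 x L)) - sum_list (map (case_prod f) ((a0,b0) # L))"
  by (induction L arbitrary: x) auto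

lemma spts_fst: fixes \<phi> :: "'a \<Rightarrow> real" shows "sum_list (map (\<lambda>s. \<phi> (fst s)) (spts b0 x L)) = \<phi> x + sum_list (map (\<lambda>s. \<phi> (fst s)) L)"
  by (induction L arbitrary: x) auto

lemma spts_snd: fixes \<psi> :: "'b \<Rightarrow> real" shows "sum_list (map (\<lambda>s. \<psi> (snd s)) (spts b0 x L)) = \<psi> b0 + sum_list (map (\<lambda>s. \<psi> (snd s)) L)"
  by (induction L arbitrary: x) (auto simp: algebra_simps)

lemma wch_diff: "\<exists>c. wch f a0 b0 x L - wch f a0 b0 y L = f x c - f y c"
  by (cases L) auto

lemma duality:
  fixes f :: "'a \<Rightarrow> 'b \<Rightarrow> real"
  assumes cp: "is_coupling \<pi> A B"
    and opt: "\<And>\<nu>. is_coupling \<nu> A B \<Longrightarrow> measure_pmf.expectation \<nu> (case_prod f) \<le> measure_pmf.expectation \<pi> (case_prod f)"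
    and fb: "\<And>x y. 0 \<le> f x y \<and> f x y \<le> 1"
  shows "\<exists>G H c d. (\<forall>x y. f x y \<le> G x + H y) \<and> (\<forall>x. c \<le> G x \<and> G x \<le> c + 1) \<and> (\<forall>y. d \<le> H y \<and> H y \<le> d + 1)
           \<and> measure_pmf.expectation A G + measure_pmf.expectation B H \<le> measure_pmf.expectation \<pi> (case_prod f)"
proof -
  let ?F = "case_prod f"
  let ?\<Gamma> = "set_pmf \<pi>"
  obtain a0 b0 where ab0: "(a0,b0) \<in> ?\<Gamma>" using set_pmf_not_empty[of \<pi>] by (metis ex_in_conv surj_pair)
  let ?w = "wch f a0 b0"
  have Fb: "\<bar>?F x\<bar> \<le> 1" for x using fb by (cases x) (auto simp: abs_le_iff intro: order.trans[of _ 0])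
  have cm: "?w a0 L \<le> 0" if "set L \<subseteq> ?\<Gamma>" for L
  proof -
    have "sum_list (map ?F (spts b0 a0 L)) \<le> sum_list (map ?F ((a0,b0) # L))"
    proof (rule perturb[OF cp opt Fb])
      show "set ((a0, b0) # L) \<subseteq> ?\<Gamma>" using that ab0 by auto
      fix a show "sum_list (map (\<lambda>s. if fst s = a then 1 else 0) (spts b0 a0 L)) = (sum_list (map (\<lambda>s. if fst s = a then 1 else 0) ((a0, b0) # L)) :: real)"
        using spts_fst[of "\<lambda>a'. if a' = a then 1 else 0" b0 a0 L] by simp
    next
      fix b show "sum_list (map (\<lambda>s. if snd s = b then 1 else 0) (spts b0 a0 L)) = (sum_list (map (\<lambda>s. if snd s = b then 1 else 0) ((a0, b0) # L)) :: real)"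
        using spts_snd[of "\<lambda>b'. if b' = b then 1 else 0" b0 a0 L] by simp
    qed
    then show ?thesis by (simp add: wch_eq)
  qed
  have wle: "?w x L \<le> 1" if "set L \<subseteq> ?\<Gamma>" for x L
  proof -
    obtain c where "?w x L - ?w a0 L = f x c - f a0 c" using wch_diff[of f a0 b0 x L a0] by blast
    then show ?thesis using cm[OF that] fb[of x c] fb[of a0 c] by linarith
  qed
  define W where "W x = {?w x L | L. set L \<subseteq> ?\<Gamma>}" for x
  have Wne: "?w x [] \<in> W x" for x unfolding W_def by (rule CollectI, rule exI[of _ "[]"]) simp
  have Wbdd: "bdd_above (W x)" for x by (auto simp: W_def bdd_above_def intro!: exI[of _ 1] wle)
  define g where "g x = Sup (W x)" for x
  have gup: "g x \<le> 1" for x unfolding g_def using Wne by (intro cSup_least) (auto simp: W_def wle)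
  have glo: "g x \<ge> -1" for x
  proof -
    have "?w x [] \<le> g x" unfolding g_def by (rule cSup_upper[OF Wne Wbdd])
    then show ?thesis using fb[of x b0] fb[of a0 b0] by simp
  qed
  have gext: "f a' b - f a b + g a \<le> g a'" if "(a,b) \<in> ?\<Gamma>" for a b a'
  proof -
    have "g a \<le> g a' - f a' b + f a b"
      unfolding g_def[of a]
    proof (rule cSup_least)
      show "W a \<noteq> {}" using Wne by blast
      fix v assume "v \<in> W a"
      then obtain L where L: "set L \<subseteq> ?\<Gamma>" "v = ?w a L" by (auto simp: W_def)
      have "?w a' ((a,b) # L) \<in> W a'" unfolding W_def
        by (rule CollectI, rule exI[of _ "(a,b) # L"]) (use L that in auto)
      then have "?w a' ((a,b) # L) \<le> g a'" unfolding g_def by (rule cSup_upper[OF _ Wbdd])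
      then show "v \<le> g a' - f a' b + f a b" using L by simp
    qed
    then show ?thesis by simp
  qed
  define h where "h y = (SUP x. f x y - g x)" for y
  have hbdd: "bdd_above (range (\<lambda>x. f x y - g x))" for y
    using fb glo by (auto simp: bdd_above_def intro!: exI[of _ 2]) (smt (verit))
  have fgh: "f x y \<le> g x + h y" for x y
    using cSUP_upper[OF UNIV_I hbdd[of y], of x] by (simp add: h_def)
  have hlo: "h y \<ge> -1" for y using fgh[of a0 y] gup[of a0] fb[of a0 y] by linarith
  have hup: "h y \<le> 2" for y unfolding h_def
    by (rule cSUP_least) (use fb glo in \<open>auto\<close>, smt (verit) fb glo)
  have heq: "g a + h b \<le> f a b" if "(a,b) \<in> ?\<Gamma>" for a b
  proof -
    have "h b \<le> f a b - g a" unfolding h_def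
    proof (rule cSUP_least)
      fix x show "f x b - g x \<le> f a b - g a" using gext[OF that, of x] by linarith
    qed simp
    then show ?thesis by simp
  qed
  have hrange: "h y \<le> h y' + 1" for y y'
  proof -
    have "h y \<le> h y' + 1" unfolding h_def[of y]
    proof (rule cSUP_least)
      fix x
      have "f x y - g x \<le> f x y' - g x + 1" using fb[of x y] fb[of x y'] by simp
      also have "\<dots> \<le> h y' + 1" using fgh[of x y'] by simp
      finally show "f x y - g x \<le> h y' + 1" .
    qed simp
    then show ?thesis .
  qed
  define g2 where "g2 x = (SUP y. f x y - h y)" for x
  have g2bdd: "bdd_above (range (\<lambda>y. f x y - h y))" for x
    using fb hlo by (auto simp: bdd_above_def intro!: exI[of _ 2]) (smt (verit))
  have fg2h: "f x y \<le> g2 x + h y" for x y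
    using cSUP_upper[OF UNIV_I g2bdd[of x], of y] by (simp add: g2_def)
  have g2le: "g2 x \<le> g x" for x unfolding g2_def
    by (rule cSUP_least) (use fgh in \<open>auto simp: algebra_simps\<close>)
  have g2range: "g2 x \<le> g2 x' + 1" for x x'
  proof -
    show "g2 x \<le> g2 x' + 1" unfolding g2_def[of x]
    proof (rule cSUP_least)
      fix y
      have "f x y - h y \<le> f x' y - h y + 1" using fb[of x y] fb[of x' y] by simp
      also have "\<dots> \<le> g2 x' + 1" using fg2h[of x' y] by simp
      finally show "f x y - h y \<le> g2 x' + 1" .
    qed simp
  qed
  have g2lo: "g2 x \<ge> -3" for x using fg2h[of x b0] hup[of b0] fb[of x b0] by linarith
  define c where "c = (INF x. g2 x)"
  have g2bb: "bdd_below (range g2)" using g2lo by (auto simp: bdd_below_def)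
  have c1: "c \<le> g2 x" for x unfolding c_def by (rule cINF_lower[OF g2bb]) simp
  have c2: "g2 x \<le> c + 1" for x
  proof -
    have "g2 x - 1 \<le> c" unfolding c_def by (rule cINF_greatest) (use g2range in \<open>auto simp: algebra_simps\<close>)
    then show ?thesis by simp
  qed
  define d where "d = (INF y. h y)"
  have hbb: "bdd_below (range h)" using hlo by (auto simp: bdd_below_def)
  have d1: "d \<le> h y" for y unfolding d_def by (rule cINF_lower[OF hbb]) simp
  have d2: "h y \<le> d + 1" for y
  proof -
    have "h y - 1 \<le> d" unfolding d_def by (rule cINF_greatest) (use hrange in \<open>auto simp: algebra_simps\<close>)
    then show ?thesis by simp
  qed
  have gabs: "\<bar>g x\<bar> \<le> 3" for x using gup[of x] glo[of x] by simp
  have g2abs: "\<bar>g2 x\<bar> \<le> 3" for x using g2le[of x] gup[of x] g2lo[of x] by simp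
  have habs: "\<bar>h x\<bar> \<le> 3" for x using hup[of x] hlo[of x] by simp
  have ig: "integrable (measure_pmf p) g" for p
    by (rule measure_pmf.integrable_const_bound[where B=3]) (use gabs in auto)
  have ig2: "integrable (measure_pmf p) g2" for p
    by (rule measure_pmf.integrable_const_bound[where B=3]) (use g2abs in auto)
  have ih: "integrable (measure_pmf p) h" for p
    by (rule measure_pmf.integrable_const_bound[where B=3]) (use habs in auto)
  have iF: "integrable (measure_pmf p) ?F" for p
    by (rule measure_pmf.integrable_const_bound[where B=1]) (use Fb in auto)
  have "measure_pmf.expectation A g2 \<le> measure_pmf.expectation A g"
    by (intro integral_mono ig ig2 g2le)
  also have "measure_pmf.expectation A g = measure_pmf.expectation \<pi> (\<lambda>x. g (fst x))"
    using cp by (auto simp: is_coupling_def)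
  finally have e1: "measure_pmf.expectation A g2 \<le> measure_pmf.expectation \<pi> (\<lambda>x. g (fst x))" .
  have e2: "measure_pmf.expectation B h = measure_pmf.expectation \<pi> (\<lambda>x. h (snd x))"
    using cp by (auto simp: is_coupling_def)
  have "measure_pmf.expectation \<pi> (\<lambda>x. g (fst x)) + measure_pmf.expectation \<pi> (\<lambda>x. h (snd x))
        = measure_pmf.expectation \<pi> (\<lambda>x. g (fst x) + h (snd x))"
    by (rule Bochner_Integration.integral_add[symmetric])
       (auto intro!: measure_pmf.integrable_const_bound[where B=3] simp: gabs habs)
  also have "\<dots> \<le> measure_pmf.expectation \<pi> ?F"
  proof (intro integral_mono_AE iF AE_pmfI)
    show "integrable (measure_pmf \<pi>) (\<lambda>x. g (fst x) + h (snd x))"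
    proof (rule measure_pmf.integrable_const_bound[where B=6])
      show "AE x in measure_pmf \<pi>. norm (g (fst x) + h (snd x)) \<le> 6"
      proof (intro always_eventually allI)
        fix x :: "'a \<times> 'b"
        show "norm (g (fst x) + h (snd x)) \<le> 6"
          using gabs[of "fst x"] habs[of "snd x"] by (simp add: abs_le_iff)
      qed
    qed simp
    fix y assume "y \<in> ?\<Gamma>"
    then show "g (fst y) + h (snd y) \<le> ?F y" using heq by (cases y) auto
  qed
  finally have "measure_pmf.expectation A g2 + measure_pmf.expectation B h \<le> measure_pmf.expectation \<pi> ?F"
    using e1 e2 by linarith
  then show ?thesis using fg2h c1 c2 d1 d2 by blast
qed

lemma pmf_int_bdd: fixes g :: "'c \<Rightarrow> real" assumes "\<And>x. \<bar>g x\<bar> \<le> B" shows "integrable (measure_pmf p) g"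
proof (rule measure_pmf.integrable_const_bound[where B=B])
  show "AE x in measure_pmf p. norm (g x) \<le> B" by (intro always_eventually allI) (simp add: assms)
qed simp

lemma hoeff_pmf:
  fixes G :: "'a \<Rightarrow> real"
  assumes "\<And>x. c \<le> G x \<and> G x \<le> c + 1" and "l > 0"
  shows "measure_pmf.expectation A (\<lambda>x. exp (l * (G x - measure_pmf.expectation A G))) \<le> exp (l\<^sup>2 / 8)"
proof -
  interpret interval_bounded_random_variable "measure_pmf A" G c "c + 1"
    by unfold_locales (use assms(1) in auto)
  have Gb: "\<bar>G x\<bar> \<le> \<bar>c\<bar> + 1" for x using assms(1)[of x] by (simp add: abs_le_iff) linarith
  have iG: "integrable (measure_pmf A) G" by (rule pmf_int_bdd[OF Gb])
  have m1: "c \<le> measure_pmf.expectation A G"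
    by (rule measure_pmf.integral_ge_const[OF iG]) (use assms(1) in auto)
  have m2: "measure_pmf.expectation A G \<le> c + 1"
    by (rule measure_pmf.integral_le_const[OF iG]) (use assms(1) in auto)
  have mb: "\<bar>measure_pmf.expectation A G\<bar> \<le> \<bar>c\<bar> + 1" using m1 m2 by (simp add: abs_le_iff) linarith
  have int: "integrable (measure_pmf A) (\<lambda>x. exp (l * (G x - measure_pmf.expectation A G)))"
  proof (rule pmf_int_bdd[where B="exp (l * (2 * \<bar>c\<bar> + 2))"])
    fix x
    have "l * (G x - measure_pmf.expectation A G) \<le> l * (2 * \<bar>c\<bar> + 2)"
      using Gb[of x] mb assms(2) by (intro mult_left_mono) (auto simp: abs_le_iff)
    then show "\<bar>exp (l * (G x - measure_pmf.expectation A G))\<bar> \<le> exp (l * (2 * \<bar>c\<bar> + 2))" by simp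
  qed
  have "ennreal (measure_pmf.expectation A (\<lambda>x. exp (l * (G x - measure_pmf.expectation A G))))
        = (\<integral>\<^sup>+ x. ennreal (exp (l * (G x - measure_pmf.expectation A G))) \<partial>measure_pmf A)"
    by (rule nn_integral_eq_integral[symmetric]) (use int in auto)
  also have "\<dots> \<le> ennreal (exp (l\<^sup>2 * (c + 1 - c)\<^sup>2 / 8))"
    by (rule Hoeffdings_lemma_nn_integral[OF assms(2)])
  finally show ?thesis by (simp add: ennreal_le_iff)
qed


lemma mgf_prod:
  fixes G :: "'a \<Rightarrow> real"
  assumes Gb: "\<And>x. c \<le> G x \<and> G x \<le> c + 1" and "l > 0"
  shows "measure_pmf.expectation (Pi_pmf {..<k} dflt (\<lambda>_. A))
           (\<lambda>as. exp (l * (\<Sum>i<k. G (as i) - measure_pmf.expectation A G))) \<le> exp (real k * l\<^sup>2 / 8)"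
proof -
  let ?m = "measure_pmf.expectation A G"
  have Gb': "\<bar>G x\<bar> \<le> \<bar>c\<bar> + 1" for x using Gb[of x] by (simp add: abs_le_iff) linarith
  have iG: "integrable (measure_pmf A) G" by (rule pmf_int_bdd[OF Gb'])
  have m1: "c \<le> ?m" by (rule measure_pmf.integral_ge_const[OF iG]) (use Gb in auto)
  have m2: "?m \<le> c + 1" by (rule measure_pmf.integral_le_const[OF iG]) (use Gb in auto)
  have tb: "\<bar>G x - ?m\<bar> \<le> 1" for x using Gb[of x] m1 m2 by (simp add: abs_le_iff)
  have ie: "integrable (measure_pmf A) (\<lambda>v. exp (l * (G v - ?m)))"
  proof (rule pmf_int_bdd[where B="exp l"])
    fix x have "l * (G x - ?m) \<le> l * 1" using tb[of x] assms(2) by (intro mult_left_mono) (auto simp: abs_le_iff)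
    then show "\<bar>exp (l * (G x - ?m))\<bar> \<le> exp l" by simp
  qed
  have "(\<lambda>as. exp (l * (\<Sum>i<k. G (as i) - ?m))) = (\<lambda>as. \<Prod>i\<in>{..<k}. exp (l * (G (as i) - ?m)))"
    by (simp add: sum_distrib_left exp_sum)
  then have "measure_pmf.expectation (Pi_pmf {..<k} dflt (\<lambda>_. A)) (\<lambda>as. exp (l * (\<Sum>i<k. G (as i) - ?m)))
        = (\<Prod>i\<in>{..<k}. measure_pmf.expectation A (\<lambda>v. exp (l * (G v - ?m))))"
    by (simp add: expectation_prod_Pi_pmf[where f="\<lambda>i v. exp (l * (G v - ?m))"] ie)
  also have "\<dots> \<le> (\<Prod>i\<in>{..<k}. exp (l\<^sup>2 / 8))"
    by (intro prod_mono conjI hoeff_pmf[OF Gb assms(2)] integral_nonneg_AE) auto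
  also have "\<dots> = exp (real k * l\<^sup>2 / 8)" by (simp add: exp_of_nat_mult[symmetric])
  finally show ?thesis .
qed


lemma mean_bounds:
  fixes G :: "'a \<Rightarrow> real"
  assumes Gb: "\<And>x. c \<le> G x \<and> G x \<le> c + 1"
  shows "\<bar>G x - measure_pmf.expectation A G\<bar> \<le> 1"
proof -
  let ?m = "measure_pmf.expectation A G"
  have Gb': "\<bar>G x\<bar> \<le> \<bar>c\<bar> + 1" for x using Gb[of x] by (simp add: abs_le_iff) linarith
  have iG: "integrable (measure_pmf A) G" by (rule pmf_int_bdd[OF Gb'])
  have m1: "c \<le> ?m" by (rule measure_pmf.integral_ge_const[OF iG]) (use Gb in auto)
  have m2: "?m \<le> c + 1" by (rule measure_pmf.integral_le_const[OF iG]) (use Gb in auto)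
  show ?thesis using Gb[of x] m1 m2 by (simp add: abs_le_iff)
qed

lemma sum_dev_bound:
  assumes "\<And>x. \<bar>g x\<bar> \<le> (1::real)"
  shows "\<bar>\<Sum>i<k. g (as i)\<bar> \<le> real k"
proof -
  have "\<bar>\<Sum>i<k. g (as i)\<bar> \<le> (\<Sum>i<k. \<bar>g (as i)\<bar>)" by (rule sum_abs)
  also have "\<dots> \<le> (\<Sum>i<k. 1)" by (intro sum_mono assms)
  finally show ?thesis by simp
qed

lemma subgauss:
  fixes G :: "'a \<Rightarrow> real" and H :: "'b \<Rightarrow> real" and f :: "'a \<Rightarrow> 'b \<Rightarrow> real"
  assumes \<mu>: "is_coupling \<mu> (Pi_pmf {..<k} undefined (\<lambda>_. A)) (Pi_pmf {..<k} undefined (\<lambda>_. B))"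
    and k: "k \<ge> 1"
    and fGH: "\<And>x y. f x y \<le> G x + H y"
    and Gb: "\<And>x. c \<le> G x \<and> G x \<le> c + 1"
    and Hb: "\<And>y. d \<le> H y \<and> H y \<le> d + 1"
    and mlt: "measure_pmf.expectation A G + measure_pmf.expectation B H < \<epsilon>"
    and \<delta>: "\<delta> > 0" "\<delta> \<le> 1"
  shows "measure_pmf.prob \<mu> {(as, bs). (\<Sum>i<k. f (as i) (bs i)) \<ge> \<epsilon> * real k + sqrt (2 * real k * ln (1 / \<delta>))} < \<delta>"
proof -
  define mG where "mG = measure_pmf.expectation A G"
  define mH where "mH = measure_pmf.expectation B H"
  define \<gamma> where "\<gamma> = \<epsilon> - mG - mH"
  have \<gamma>: "\<gamma> > 0" using mlt by (simp add: \<gamma>_def mG_def mH_def)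
  define s where "s = sqrt (2 * real k * ln (1 / \<delta>))"
  have lnnn: "ln (1 / \<delta>) \<ge> 0" using \<delta> by simp
  have s0: "s \<ge> 0" using lnnn by (simp add: s_def)
  have s2: "s\<^sup>2 = 2 * real k * ln (1 / \<delta>)" using lnnn by (simp add: s_def)
  have kpos: "real k > 0" using k by simp
  define T where "T = s + \<gamma> * real k"
  have Tpos: "T > 0" using s0 \<gamma> kpos unfolding T_def by (smt (verit) mult_pos_pos)
  define l where "l = T / real k"
  have lpos: "l > 0" using Tpos kpos by (simp add: l_def)
  define X where "X as = (\<Sum>i<k. G (as i) - mG)" for as :: "nat \<Rightarrow> 'a"
  define Y where "Y bs = (\<Sum>i<k. H (bs i) - mH)" for bs :: "nat \<Rightarrow> 'b"
  have Xb: "\<bar>X as\<bar> \<le> real k" for as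
    unfolding X_def mG_def by (rule sum_dev_bound) (rule mean_bounds[OF Gb])
  have Yb: "\<bar>Y bs\<bar> \<le> real k" for bs
    unfolding Y_def mH_def by (rule sum_dev_bound) (rule mean_bounds[OF Hb])
  define E where "E = {(as, bs). (\<Sum>i<k. f (as i) (bs i)) \<ge> \<epsilon> * real k + s}"
  define \<Phi> where "\<Phi> z = exp (- l * T) / 2 * (exp (2 * l * X (fst z)) + exp (2 * l * Y (snd z)))" for z
  have ind: "indicator E z \<le> \<Phi> z" for z
  proof (cases "z \<in> E")
    case True
    obtain as bs where z: "z = (as, bs)" by (cases z)
    have "(\<Sum>i<k. f (as i) (bs i)) \<le> (\<Sum>i<k. G (as i) + H (bs i))" by (intro sum_mono fGH)
    also have "\<dots> = X as + Y bs + real k * (mG + mH)"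
      by (simp add: X_def Y_def sum.distrib sum_subtractf algebra_simps)
    finally have "X as + Y bs \<ge> T" using True z by (simp add: E_def T_def \<gamma>_def algebra_simps)
    then have "l * (X as + Y bs) - l * T \<ge> 0" using lpos mult_left_mono[of T "X as + Y bs" l] by (simp add: algebra_simps)
    then have "1 \<le> exp (l * (X as + Y bs) - l * T)" by simp
    also have "exp (l * (X as + Y bs) - l * T) = exp (- l * T) * (exp (l * X as) * exp (l * Y bs))"
      by (simp add: exp_add[symmetric] exp_diff algebra_simps exp_minus field_simps)
    also have "exp (l * X as) * exp (l * Y bs) \<le> (exp (2 * l * X as) + exp (2 * l * Y bs)) / 2"
    proof -
      have "0 \<le> (exp (l * X as) - exp (l * Y bs))\<^sup>2" by simp
      moreover have "exp (2 * l * X as) = (exp (l * X as))\<^sup>2" "exp (2 * l * Y bs) = (exp (l * Y bs))\<^sup>2"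
        by (simp_all add: power2_eq_square exp_add[symmetric])
      ultimately show ?thesis by (simp add: power2_eq_square algebra_simps)
    qed
    finally show ?thesis using True z by (simp add: \<Phi>_def mult_left_mono)
  next
    case False
    then show ?thesis by (simp add: \<Phi>_def)
  qed
  have iX: "integrable (measure_pmf p) (\<lambda>as. exp (2 * l * X as))" for p
  proof (rule pmf_int_bdd[where B="exp (2 * l * real k)"])
    fix as have "2 * l * X as \<le> 2 * l * real k" using Xb[of as] lpos by (intro mult_left_mono) auto
    then show "\<bar>exp (2 * l * X as)\<bar> \<le> exp (2 * l * real k)" by simp
  qed
  have iY: "integrable (measure_pmf p) (\<lambda>bs. exp (2 * l * Y bs))" for p
  proof (rule pmf_int_bdd[where B="exp (2 * l * real k)"])
    fix bs have "2 * l * Y bs \<le> 2 * l * real k" using Yb[of bs] lpos by (intro mult_left_mono) auto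
    then show "\<bar>exp (2 * l * Y bs)\<bar> \<le> exp (2 * l * real k)" by simp
  qed
  have iX': "integrable (measure_pmf \<mu>) (\<lambda>z. exp (2 * l * X (fst z)))"
  proof (rule pmf_int_bdd[where B="exp (2 * l * real k)"])
    fix z :: "(nat \<Rightarrow> 'a) \<times> (nat \<Rightarrow> 'b)"
    have "2 * l * X (fst z) \<le> 2 * l * real k" using Xb[of "fst z"] lpos by (intro mult_left_mono) auto
    then show "\<bar>exp (2 * l * X (fst z))\<bar> \<le> exp (2 * l * real k)" by simp
  qed
  have iY': "integrable (measure_pmf \<mu>) (\<lambda>z. exp (2 * l * Y (snd z)))"
  proof (rule pmf_int_bdd[where B="exp (2 * l * real k)"])
    fix z :: "(nat \<Rightarrow> 'a) \<times> (nat \<Rightarrow> 'b)"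
    have "2 * l * Y (snd z) \<le> 2 * l * real k" using Yb[of "snd z"] lpos by (intro mult_left_mono) auto
    then show "\<bar>exp (2 * l * Y (snd z))\<bar> \<le> exp (2 * l * real k)" by simp
  qed
  have eX: "measure_pmf.expectation \<mu> (\<lambda>z. exp (2 * l * X (fst z))) \<le> exp (real k * (2 * l)\<^sup>2 / 8)"
  proof -
    have "measure_pmf.expectation \<mu> (\<lambda>z. exp (2 * l * X (fst z)))
        = measure_pmf.expectation (map_pmf fst \<mu>) (\<lambda>as. exp (2 * l * X as))" by simp
    also have "\<dots> = measure_pmf.expectation (Pi_pmf {..<k} undefined (\<lambda>_. A)) (\<lambda>as. exp ((2 * l) * (\<Sum>i<k. G (as i) - measure_pmf.expectation A G)))"
      using \<mu> by (simp add: is_coupling_def X_def mG_def)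
    also have "\<dots> \<le> exp (real k * (2 * l)\<^sup>2 / 8)"
      by (rule mgf_prod[OF Gb]) (use lpos in simp)
    finally show ?thesis .
  qed
  have eY: "measure_pmf.expectation \<mu> (\<lambda>z. exp (2 * l * Y (snd z))) \<le> exp (real k * (2 * l)\<^sup>2 / 8)"
  proof -
    have "measure_pmf.expectation \<mu> (\<lambda>z. exp (2 * l * Y (snd z)))
        = measure_pmf.expectation (map_pmf snd \<mu>) (\<lambda>bs. exp (2 * l * Y bs))" by simp
    also have "\<dots> = measure_pmf.expectation (Pi_pmf {..<k} undefined (\<lambda>_. B)) (\<lambda>bs. exp ((2 * l) * (\<Sum>i<k. H (bs i) - measure_pmf.expectation B H)))"
      using \<mu> by (simp add: is_coupling_def Y_def mH_def)
    also have "\<dots> \<le> exp (real k * (2 * l)\<^sup>2 / 8)"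
      by (rule mgf_prod[OF Hb]) (use lpos in simp)
    finally show ?thesis .
  qed
  have "measure_pmf.prob \<mu> E = measure_pmf.expectation \<mu> (indicator E)" by simp
  also have "\<dots> \<le> measure_pmf.expectation \<mu> \<Phi>"
  proof (intro integral_mono ind)
    show "integrable (measure_pmf \<mu>) (indicat_real E)" by (rule pmf_int_bdd[where B=1]) (simp add: indicator_def)
    show "integrable (measure_pmf \<mu>) \<Phi>" unfolding \<Phi>_def
      by (intro Bochner_Integration.integrable_mult_right Bochner_Integration.integrable_add iX' iY')
  qed
  also have "\<dots> = exp (- l * T) / 2 * (measure_pmf.expectation \<mu> (\<lambda>z. exp (2 * l * X (fst z))) + measure_pmf.expectation \<mu> (\<lambda>z. exp (2 * l * Y (snd z))))"
    unfolding \<Phi>_def by (simp add: Bochner_Integration.integral_add[OF iX' iY'])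
  also have "\<dots> \<le> exp (- l * T) / 2 * (exp (real k * (2 * l)\<^sup>2 / 8) + exp (real k * (2 * l)\<^sup>2 / 8))"
    by (intro mult_left_mono add_mono eX eY) auto
  also have "\<dots> = exp (- l * T) * exp (real k * (2 * l)\<^sup>2 / 8)" by simp
  also have "\<dots> = exp (- l * T + real k * (2 * l)\<^sup>2 / 8)" by (rule exp_add[symmetric])
  also have "- l * T + real k * (2 * l)\<^sup>2 / 8 = - T\<^sup>2 / (2 * real k)"
  proof -
    have TT: "T = real k * l" using kpos by (simp add: l_def)
    show ?thesis unfolding TT using kpos by (simp add: power2_eq_square field_simps)
  qed
  also have "exp (- T\<^sup>2 / (2 * real k)) < exp (- s\<^sup>2 / (2 * real k))"
  proof -
    have "s < T" unfolding T_def using \<gamma> kpos by (simp add: mult_pos_pos)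
    then have "s\<^sup>2 < T\<^sup>2" by (rule power_strict_mono) (use s0 in auto)
    then show ?thesis using kpos by (simp add: divide_strict_right_mono)
  qed
  also have "- s\<^sup>2 / (2 * real k) = ln \<delta>" using s2 kpos \<delta> by (simp add: ln_div)
  also have "exp (ln \<delta>) = \<delta>" using \<delta> by simp
  finally show ?thesis by (simp add: E_def s_def)
qed

lemma pointwise_subseq:
  fixes u :: "nat \<Rightarrow> 'c \<Rightarrow> real"
  assumes D: "countable D" "D \<noteq> {}" and ub: "\<And>n x. 0 \<le> u n x \<and> u n x \<le> 1"
  shows "\<exists>r p. strict_mono r \<and> (\<forall>x\<in>D. (\<lambda>n. u (r n) x) \<longlonglongrightarrow> p x)"
proof -
  define e where "e = from_nat_into D"
  define \<Phi> where "\<Phi> n = (\<lambda>j. u n (e j))" for n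
  define K where "K = (Pi UNIV (\<lambda>_. {0..1::real}) :: (nat \<Rightarrow> real) set)"
  have "compactin (product_topology (\<lambda>_. euclidean) UNIV) (PiE UNIV (\<lambda>_. {0..1::real}))"
    by (subst compactin_PiE) auto
  then have "compact K" unfolding K_def by (simp add: euclidean_product_topology PiE_UNIV_domain)
  then have "seq_compact K" by (rule compact_imp_seq_compact)
  moreover have "\<forall>n. \<Phi> n \<in> K" using ub by (auto simp: K_def \<Phi>_def)
  ultimately obtain l r where lr: "strict_mono r" "(\<Phi> \<circ> r) \<longlonglongrightarrow> l" by (rule seq_compactE)
  have pw: "(\<lambda>n. \<Phi> (r n) j) \<longlonglongrightarrow> l j" for j
  proof -
    have "isCont (\<lambda>\<phi>::nat \<Rightarrow> real. \<phi> j) l"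
      using continuous_on_product_coordinates[of j] continuous_on_eq_continuous_at[OF open_UNIV] by blast
    from isCont_tendsto_compose[OF this lr(2)] show ?thesis by (simp add: o_def)
  qed
  define p where "p x = l (SOME j. e j = x)" for x
  have "(\<lambda>n. u (r n) x) \<longlonglongrightarrow> p x" if "x \<in> D" for x
  proof -
    have "\<exists>j. e j = x" unfolding e_def using from_nat_into_surj[OF D(1) that] .
    then have ej: "e (SOME j. e j = x) = x" by (rule someI_ex)
    show ?thesis using pw[of "SOME j. e j = x"] by (simp add: \<Phi>_def ej p_def)
  qed
  then show ?thesis using lr(1) by blast
qed

lemma infsetsum_le_fin:
  fixes g :: "'c \<Rightarrow> real"
  assumes nn: "\<And>x. x \<in> A \<Longrightarrow> g x \<ge> 0" and fb: "\<And>Fs. finite Fs \<Longrightarrow> Fs \<subseteq> A \<Longrightarrow> sum g Fs \<le> Bd"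
  shows "g abs_summable_on A" "infsetsum g A \<le> Bd"
proof -
  have fb': "sum (\<lambda>x. norm (g x)) Fs \<le> Bd" if "finite Fs" "Fs \<subseteq> A" for Fs
  proof -
    have "sum (\<lambda>x. norm (g x)) Fs = sum g Fs" using nn that by (intro sum.cong) auto
    then show ?thesis using fb[OF that] by simp
  qed
  show s: "g abs_summable_on A" by (rule abs_summable_finite_sumsI[OF fb'])
  have "ereal (infsetsum g A) = (SUP F\<in>{F. finite F \<and> F \<subseteq> A}. ereal (sum g F))"
    by (rule infsetsum_nonneg_is_SUPREMUM_ereal[OF s nn])
  also have "\<dots> \<le> ereal Bd" by (rule SUP_least) (use fb in auto)
  finally show "infsetsum g A \<le> Bd" by simp
qed

lemma fin_le_infsetsum:
  fixes g :: "'c \<Rightarrow> real"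
  assumes "g abs_summable_on A" "\<And>x. x \<in> A \<Longrightarrow> g x \<ge> 0" "finite Fs" "Fs \<subseteq> A"
  shows "sum g Fs \<le> infsetsum g A"
proof -
  have "infsetsum g Fs \<le> infsetsum g A"
    by (rule infsetsum_mono_neutral_left) (use assms in auto)
  then show ?thesis using assms(3) by simp
qed

lemma tight:
  fixes A :: "'c pmf"
  assumes "\<eta> > 0"
  shows "\<exists>S. finite S \<and> measure_pmf.prob A (- S) < \<eta>"
proof -
  have "ereal (infsetsum (pmf A) UNIV) = (SUP F\<in>{F. finite F \<and> F \<subseteq> UNIV}. ereal (sum (pmf A) F))"
    by (rule infsetsum_nonneg_is_SUPREMUM_ereal) auto
  then have "(SUP F\<in>{F. finite F \<and> F \<subseteq> UNIV}. ereal (sum (pmf A) F)) = ereal 1"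
    by (simp add: infsetsum_pmf_eq_1)
  moreover have "ereal (1 - \<eta>) < ereal 1" using assms by simp
  ultimately have "ereal (1 - \<eta>) < (SUP F\<in>{F. finite F \<and> F \<subseteq> UNIV}. ereal (sum (pmf A) F))" by simp
  then obtain S where S: "finite S" "ereal (1 - \<eta>) < ereal (sum (pmf A) S)"
    by (subst (asm) less_SUP_iff) auto
  have "measure_pmf.prob A (- S) = 1 - measure_pmf.prob A S"
    using measure_pmf.prob_compl[of S A] by (simp add: Compl_eq_Diff_UNIV)
  also have "measure_pmf.prob A S = sum (pmf A) S" by (rule measure_measure_pmf_finite[OF S(1)])
  finally show ?thesis using S by auto
qed

lemma coupling_support:
  assumes "is_coupling \<nu> A B" "x \<in> set_pmf \<nu>"
  shows "x \<in> set_pmf A \<times> set_pmf B"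
proof -
  have eA: "A = map_pmf fst \<nu>" "B = map_pmf snd \<nu>" using assms(1) by (simp_all add: is_coupling_def)
  show ?thesis using assms(2) unfolding eA by (auto simp: mem_Times_iff)
qed

lemma coupling_mass:
  assumes "is_coupling \<nu> A B" "finite S" "finite T"
  shows "(\<Sum>x\<in>S \<times> T. pmf \<nu> x) \<ge> 1 - measure_pmf.prob A (- S) - measure_pmf.prob B (- T)"
proof -
  have "(\<Sum>x\<in>S \<times> T. pmf \<nu> x) = measure_pmf.prob \<nu> (S \<times> T)"
    using assms by (simp add: measure_measure_pmf_finite)
  moreover have "measure_pmf.prob \<nu> (fst -` (- S)) = measure_pmf.prob A (- S)"
    using assms(1) measure_map_pmf[of fst \<nu> "- S"] by (simp add: is_coupling_def)
  moreover have "measure_pmf.prob \<nu> (snd -` (- T)) = measure_pmf.prob B (- T)"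
    using assms(1) measure_map_pmf[of snd \<nu> "- T"] by (simp add: is_coupling_def)
  moreover have "1 \<le> measure_pmf.prob \<nu> (S \<times> T) + measure_pmf.prob \<nu> (fst -` (- S)) + measure_pmf.prob \<nu> (snd -` (- T))"
  proof -
    have "1 = measure_pmf.prob \<nu> ((S \<times> T) \<union> (fst -` (- S)) \<union> (snd -` (- T)))"
    proof -
      have "(S \<times> T) \<union> (fst -` (- S)) \<union> (snd -` (- T)) = UNIV" by auto
      then show ?thesis by simp
    qed
    also have "\<dots> \<le> measure_pmf.prob \<nu> ((S \<times> T) \<union> (fst -` (- S))) + measure_pmf.prob \<nu> (snd -` (- T))"
      by (rule measure_Un_le) auto
    also have "measure_pmf.prob \<nu> ((S \<times> T) \<union> (fst -` (- S))) \<le> measure_pmf.prob \<nu> (S \<times> T) + measure_pmf.prob \<nu> (fst -` (- S))"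
      by (rule measure_Un_le) auto
    finally show ?thesis by simp
  qed
  ultimately show ?thesis by linarith
qed

lemma opt_exists:
  fixes F :: "'a \<times> 'b \<Rightarrow> real" and A :: "'a pmf" and B :: "'b pmf"
  assumes Fb: "\<And>x. 0 \<le> F x \<and> F x \<le> 1"
  shows "\<exists>\<pi>. is_coupling \<pi> A B \<and> (\<forall>\<nu>. is_coupling \<nu> A B \<longrightarrow> measure_pmf.expectation \<nu> F \<le> measure_pmf.expectation \<pi> F)"
proof -
  let ?E = "\<lambda>\<nu>. measure_pmf.expectation \<nu> F"
  define Cs where "Cs = {\<nu>. is_coupling \<nu> A B}"
  have c0: "pair_pmf A B \<in> Cs" by (simp add: Cs_def is_coupling_def map_fst_pair_pmf map_snd_pair_pmf)
  have Fabs: "\<bar>F x\<bar> \<le> 1" for x using Fb[of x] by simp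
  have iF: "integrable (measure_pmf \<nu>) F" for \<nu> by (rule pmf_int_bdd[OF Fabs])
  have Eb: "?E \<nu> \<le> 1" for \<nu>
    by (rule measure_pmf.integral_le_const[OF iF]) (use Fb in auto)
  define V where "V = (SUP \<nu>\<in>Cs. ?E \<nu>)"
  have bdd: "bdd_above (?E ` Cs)" using Eb by (auto simp: bdd_above_def)
  have Vge: "?E \<nu> \<le> V" if "\<nu> \<in> Cs" for \<nu> unfolding V_def by (rule cSUP_upper[OF that bdd])
  have "\<exists>\<nu>. \<nu> \<in> Cs \<and> V - inverse (real (Suc n)) < ?E \<nu>" for n
  proof -
    have "V - inverse (real (Suc n)) < V" by simp
    moreover have "Cs \<noteq> {}" using c0 by auto
    ultimately show ?thesis unfolding V_def using less_cSUP_iff[OF _ bdd] by auto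
  qed
  then obtain \<pi>s where \<pi>s: "\<And>n. \<pi>s n \<in> Cs" "\<And>n. V - inverse (real (Suc n)) < ?E (\<pi>s n)" by metis
  define D where "D = set_pmf A \<times> set_pmf B"
  have Dc: "countable D" "D \<noteq> {}" by (auto simp: D_def set_pmf_not_empty)
  have supp: "pmf \<nu> x = 0" if "\<nu> \<in> Cs" "x \<notin> D" for \<nu> x
    using coupling_support[of \<nu> A B x] that by (auto simp: Cs_def D_def set_pmf_eq)
  obtain r p0 where rp: "strict_mono r" "\<And>x. x \<in> D \<Longrightarrow> (\<lambda>n. pmf (\<pi>s (r n)) x) \<longlonglongrightarrow> p0 x"
  proof -
    have "\<exists>r p. strict_mono r \<and> (\<forall>x\<in>D. (\<lambda>n. pmf (\<pi>s (r n)) x) \<longlonglongrightarrow> p x)"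
      by (rule pointwise_subseq[OF Dc]) (simp add: pmf_le_1)
    then show ?thesis using that by blast
  qed
  define p where "p x = (if x \<in> D then p0 x else 0)" for x
  define \<rho> where "\<rho> n = \<pi>s (r n)" for n
  have \<rho>C: "is_coupling (\<rho> n) A B" for n using \<pi>s(1) by (simp add: \<rho>_def Cs_def)
  have conv: "(\<lambda>n. pmf (\<rho> n) x) \<longlonglongrightarrow> p x" for x
  proof (cases "x \<in> D")
    case True then show ?thesis using rp(2) by (simp add: \<rho>_def p_def)
  next
    case False then show ?thesis using supp \<pi>s(1) by (simp add: \<rho>_def p_def)
  qed
  have Econv: "(\<lambda>n. ?E (\<rho> n)) \<longlonglongrightarrow> V"
  proof (rule tendsto_sandwich[of "\<lambda>n. V - inverse (real (Suc n))" _ _ "\<lambda>n. V"])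
    show "\<forall>\<^sub>F n in sequentially. V - inverse (real (Suc n)) \<le> ?E (\<rho> n)"
    proof (intro always_eventually allI)
      fix n
      have "n \<le> r n" using seq_suble[OF rp(1)] by simp
      then have "inverse (real (Suc (r n))) \<le> inverse (real (Suc n))" by (simp add: field_simps)
      then have "V - inverse (real (Suc n)) \<le> V - inverse (real (Suc (r n)))" by linarith
      with \<pi>s(2)[of "r n"] show "V - inverse (real (Suc n)) \<le> ?E (\<rho> n)" unfolding \<rho>_def by linarith
    qed
    show "\<forall>\<^sub>F n in sequentially. ?E (\<rho> n) \<le> V" using Vge \<pi>s(1) by (simp add: \<rho>_def)
    show "(\<lambda>n. V - inverse (real (Suc n))) \<longlonglongrightarrow> V"
      using tendsto_diff[OF tendsto_const LIMSEQ_inverse_real_of_nat, of V] by simp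
  qed simp
  have pnn: "p x \<ge> 0" for x by (rule LIMSEQ_le_const[OF conv]) simp
  have fconv: "(\<lambda>n. \<Sum>x\<in>Fs. pmf (\<rho> n) x * w x) \<longlonglongrightarrow> (\<Sum>x\<in>Fs. p x * w x)" for Fs w
    by (intro tendsto_sum tendsto_mult_right conv)
  have rowb: "(\<lambda>b. p (a,b)) abs_summable_on UNIV \<and> infsetsum (\<lambda>b. p (a,b)) UNIV \<le> pmf A a" for a
  proof -
    have "sum (\<lambda>b. p (a,b)) Bs \<le> pmf A a" if "finite Bs" for Bs
    proof (rule LIMSEQ_le_const2)
      show "(\<lambda>n. \<Sum>b\<in>Bs. pmf (\<rho> n) (a,b)) \<longlonglongrightarrow> (\<Sum>b\<in>Bs. p (a,b))"
        by (intro tendsto_sum conv)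
      show "\<exists>N. \<forall>n\<ge>N. (\<Sum>b\<in>Bs. pmf (\<rho> n) (a,b)) \<le> pmf A a"
        using fin_le_infsetsum[OF coupling_rows(1)[OF \<rho>C] _ that] coupling_rows(2)[OF \<rho>C] by auto
    qed
    then show ?thesis using infsetsum_le_fin[of UNIV "\<lambda>b. p (a,b)" "pmf A a"] pnn by auto
  qed
  have colb: "(\<lambda>a. p (a,b)) abs_summable_on UNIV \<and> infsetsum (\<lambda>a. p (a,b)) UNIV \<le> pmf B b" for b
  proof -
    have "sum (\<lambda>a. p (a,b)) As \<le> pmf B b" if "finite As" for As
    proof (rule LIMSEQ_le_const2)
      show "(\<lambda>n. \<Sum>a\<in>As. pmf (\<rho> n) (a,b)) \<longlonglongrightarrow> (\<Sum>a\<in>As. p (a,b))"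
        by (intro tendsto_sum conv)
      show "\<exists>N. \<forall>n\<ge>N. (\<Sum>a\<in>As. pmf (\<rho> n) (a,b)) \<le> pmf B b"
        using fin_le_infsetsum[OF coupling_cols(1)[OF \<rho>C] _ that] coupling_cols(2)[OF \<rho>C] by auto
    qed
    then show ?thesis using infsetsum_le_fin[of UNIV "\<lambda>a. p (a,b)" "pmf B b"] pnn by auto
  qed
  have whole: "p abs_summable_on UNIV \<and> infsetsum p UNIV \<le> 1"
  proof -
    have "sum p Fs \<le> 1" if "finite Fs" for Fs
    proof (rule LIMSEQ_le_const2)
      show "(\<lambda>n. \<Sum>x\<in>Fs. pmf (\<rho> n) x) \<longlonglongrightarrow> sum p Fs" by (intro tendsto_sum conv)
      show "\<exists>N. \<forall>n\<ge>N. (\<Sum>x\<in>Fs. pmf (\<rho> n) x) \<le> 1"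
        using that by (simp add: measure_measure_pmf_finite[symmetric])
    qed
    then show ?thesis using infsetsum_le_fin[of UNIV p 1] pnn by auto
  qed
  have tot: "infsetsum p UNIV = 1"
  proof (rule ccontr)
    assume "infsetsum p UNIV \<noteq> 1"
    then have lt: "infsetsum p UNIV < 1" using whole by simp
    define \<eta> where "\<eta> = (1 - infsetsum p UNIV) / 3"
    have \<eta>: "\<eta> > 0" using lt by (simp add: \<eta>_def)
    obtain S where S: "finite S" "measure_pmf.prob A (- S) < \<eta>" using tight[OF \<eta>] by blast
    obtain T where T: "finite T" "measure_pmf.prob B (- T) < \<eta>" using tight[OF \<eta>] by blast
    have "sum p (S \<times> T) \<ge> 1 - measure_pmf.prob A (- S) - measure_pmf.prob B (- T)"
    proof (rule LIMSEQ_le_const)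
      show "(\<lambda>n. \<Sum>x\<in>S \<times> T. pmf (\<rho> n) x) \<longlonglongrightarrow> sum p (S \<times> T)" by (intro tendsto_sum conv)
      show "\<exists>N. \<forall>n\<ge>N. 1 - measure_pmf.prob A (- S) - measure_pmf.prob B (- T) \<le> (\<Sum>x\<in>S \<times> T. pmf (\<rho> n) x)"
        using coupling_mass[OF \<rho>C S(1) T(1)] by auto
    qed
    moreover have "sum p (S \<times> T) \<le> infsetsum p UNIV"
      by (rule fin_le_infsetsum) (use whole pnn S T in auto)
    ultimately have h1: "1 - measure_pmf.prob A (- S) - measure_pmf.prob B (- T) \<le> infsetsum p UNIV" by linarith
    have h2: "measure_pmf.prob A (- S) + measure_pmf.prob B (- T) < 2 * \<eta>" using S(2) T(2) by linarith
    have h3: "infsetsum p UNIV = 1 - 3 * \<eta>" unfolding \<eta>_def by (simp add: field_simps)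
    show False using h1 h2 h3 \<eta> by linarith
  qed
  have pz: "p (a,b) = 0" if "a \<notin> set_pmf A \<or> b \<notin> set_pmf B" for a b
    using that unfolding p_def D_def by auto
  have sumS: "p abs_summable_on (set_pmf A \<times> set_pmf B)"
    using whole abs_summable_on_subset by blast
  have totS: "infsetsum p (set_pmf A \<times> set_pmf B) = 1"
  proof -
    have "infsetsum p (set_pmf A \<times> set_pmf B) = infsetsum p UNIV"
      by (rule infsetsum_cong_neutral) (use pz in auto)
    then show ?thesis using tot by simp
  qed
  have rsum: "infsetsum (\<lambda>b. p (a,b)) UNIV = pmf A a" for a
  proof -
    define rr where "rr a = infsetsum (\<lambda>b. p (a,b)) UNIV" for a
    have rr_le: "rr a \<le> pmf A a" for a using rowb by (simp add: rr_def)
    have rr_nn: "rr a \<ge> 0" for a unfolding rr_def by (rule infsetsum_nonneg) (simp add: pnn)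
    have rr_z: "rr a = 0" if "a \<notin> set_pmf A" for a
      unfolding rr_def using pz that by (simp add: infsetsum_all_0)
    have rrS: "rr a = infsetsum (\<lambda>b. p (a,b)) (set_pmf B)" for a
      unfolding rr_def by (rule infsetsum_cong_neutral) (use pz in auto)
    have rr_abs: "rr abs_summable_on UNIV"
      by (rule abs_summable_on_comparison_test[OF pmf_abs_summable[of A UNIV]]) (use rr_le rr_nn in auto)
    have "infsetsum rr UNIV = infsetsum rr (set_pmf A)"
      by (rule infsetsum_cong_neutral) (use rr_z in auto)
    also have "\<dots> = infsetsum (\<lambda>a. infsetsum (\<lambda>b. p (a,b)) (set_pmf B)) (set_pmf A)"
      using rrS by simp
    also have "\<dots> = infsetsum p (set_pmf A \<times> set_pmf B)"
      by (rule infsetsum_Sigma[symmetric]) (use sumS in auto)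
    also have "\<dots> = 1" by (rule totS)
    finally have "infsetsum rr UNIV = 1" .
    then have "infsetsum (\<lambda>a. pmf A a - rr a) UNIV = 0"
      by (subst infsetsum_diff) (use rr_abs in \<open>auto simp: infsetsum_pmf_eq_1\<close>)
    then have "pmf A a - rr a = 0"
      by (rule infsetsum_nonneg_zero[rotated 2]) (use rr_abs rr_le in auto)
    then show ?thesis by (simp add: rr_def)
  qed
  have csum: "infsetsum (\<lambda>a. p (a,b)) UNIV = pmf B b" for b
  proof -
    define rr where "rr b = infsetsum (\<lambda>a. p (a,b)) UNIV" for b
    have rr_le: "rr b \<le> pmf B b" for b using colb by (simp add: rr_def)
    have rr_nn: "rr b \<ge> 0" for b unfolding rr_def by (rule infsetsum_nonneg) (simp add: pnn)
    have rr_z: "rr b = 0" if "b \<notin> set_pmf B" for b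
      unfolding rr_def using pz that by (simp add: infsetsum_all_0)
    have rrS: "rr b = infsetsum (\<lambda>a. p (a,b)) (set_pmf A)" for b
      unfolding rr_def by (rule infsetsum_cong_neutral) (use pz in auto)
    have rr_abs: "rr abs_summable_on UNIV"
      by (rule abs_summable_on_comparison_test[OF pmf_abs_summable[of B UNIV]]) (use rr_le rr_nn in auto)
    have sw: "infsetsum p (set_pmf A \<times> set_pmf B) = infsetsum (\<lambda>(b,a). p (a,b)) (set_pmf B \<times> set_pmf A)"
    proof -
      have img: "(\<lambda>(b,a). (a,b)) ` (set_pmf B \<times> set_pmf A) = set_pmf A \<times> set_pmf B" by force
      have inj: "inj_on (\<lambda>(b::'b,a::'a). (a,b)) (set_pmf B \<times> set_pmf A)" by (auto simp: inj_on_def)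
      have "infsetsum p (set_pmf A \<times> set_pmf B) = infsetsum (\<lambda>x. p ((\<lambda>(b,a). (a,b)) x)) (set_pmf B \<times> set_pmf A)"
        unfolding img[symmetric] by (rule infsetsum_reindex[OF inj])
      also have "\<dots> = infsetsum (\<lambda>(b,a). p (a,b)) (set_pmf B \<times> set_pmf A)"
        by (rule infsetsum_cong) (auto split: prod.split)
      finally show ?thesis .
    qed
    have sumS': "(\<lambda>(b,a). p (a,b)) abs_summable_on (set_pmf B \<times> set_pmf A)"
    proof -
      have img: "(\<lambda>(b,a). (a,b)) ` (set_pmf B \<times> set_pmf A) = set_pmf A \<times> set_pmf B" by force
      have inj: "inj_on (\<lambda>(b::'b,a::'a). (a,b)) (set_pmf B \<times> set_pmf A)" by (auto simp: inj_on_def)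
      have "(\<lambda>x. p ((\<lambda>(b,a). (a,b)) x)) abs_summable_on (set_pmf B \<times> set_pmf A)"
        using sumS unfolding abs_summable_on_reindex_iff[OF inj] img .
      moreover have "(\<lambda>x. p ((\<lambda>(b,a). (a,b)) x)) = (\<lambda>(b,a). p (a,b))" by (auto split: prod.split)
      ultimately show ?thesis by metis
    qed
    have "infsetsum rr UNIV = infsetsum rr (set_pmf B)"
      by (rule infsetsum_cong_neutral) (use rr_z in auto)
    also have "\<dots> = infsetsum (\<lambda>b. infsetsum (\<lambda>a. p (a,b)) (set_pmf A)) (set_pmf B)"
      using rrS by simp
    also have "\<dots> = infsetsum (\<lambda>(b,a). p (a,b)) (set_pmf B \<times> set_pmf A)"
      by (subst infsetsum_Sigma) (use sumS' in auto)
    also have "\<dots> = 1" using sw totS by simp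
    finally have "infsetsum rr UNIV = 1" .
    then have "infsetsum (\<lambda>b. pmf B b - rr b) UNIV = 0"
      by (subst infsetsum_diff) (use rr_abs in \<open>auto simp: infsetsum_pmf_eq_1\<close>)
    then have "pmf B b - rr b = 0"
      by (rule infsetsum_nonneg_zero[rotated 2]) (use rr_abs rr_le in auto)
    then show ?thesis by (simp add: rr_def)
  qed
  obtain \<pi> where \<pi>: "is_coupling \<pi> A B" "\<And>x. pmf \<pi> x = p x"
    using embed_coupling[of p A B] pnn rowb colb rsum csum by blast
  have onemF: "infsetsum (\<lambda>x. pmf \<nu> x * (1 - F x)) UNIV = 1 - ?E \<nu>" for \<nu>
  proof -
    have s1: "(\<lambda>x. pmf \<nu> x * F x) abs_summable_on UNIV"
      by (rule abs_summable_on_comparison_test[OF pmf_abs_summable[of \<nu> UNIV]])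
         (use Fabs in \<open>auto simp: abs_mult intro: mult_left_le\<close>)
    have "infsetsum (\<lambda>x. pmf \<nu> x * (1 - F x)) UNIV = infsetsum (\<lambda>x. pmf \<nu> x - pmf \<nu> x * F x) UNIV"
      by (simp add: algebra_simps)
    also have "\<dots> = 1 - ?E \<nu>"
      by (subst infsetsum_diff[OF pmf_abs_summable s1]) (simp add: infsetsum_pmf_eq_1 pmf_expectation_eq_infsetsum)
    finally show ?thesis .
  qed
  have val: "infsetsum (\<lambda>x. p x * (1 - F x)) UNIV \<le> 1 - V \<and> (\<lambda>x. p x * (1 - F x)) abs_summable_on UNIV"
  proof -
    have "sum (\<lambda>x. p x * (1 - F x)) Fs \<le> 1 - V" if "finite Fs" for Fs
    proof (rule tendsto_le[OF trivial_limit_sequentially])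
      show "(\<lambda>n. \<Sum>x\<in>Fs. pmf (\<rho> n) x * (1 - F x)) \<longlonglongrightarrow> (\<Sum>x\<in>Fs. p x * (1 - F x))" by (rule fconv)
      show "(\<lambda>n. 1 - ?E (\<rho> n)) \<longlonglongrightarrow> 1 - V" by (intro tendsto_diff tendsto_const Econv)
      show "\<forall>\<^sub>F n in sequentially. (\<Sum>x\<in>Fs. pmf (\<rho> n) x * (1 - F x)) \<le> 1 - ?E (\<rho> n)"
      proof (intro always_eventually allI)
        fix n
        have "(\<lambda>x. pmf (\<rho> n) x * (1 - F x)) abs_summable_on UNIV"
          by (rule abs_summable_on_comparison_test[OF pmf_abs_summable[of "\<rho> n" UNIV]])
             (use Fb in \<open>auto simp: abs_mult intro!: mult_left_le\<close>)
        then have "(\<Sum>x\<in>Fs. pmf (\<rho> n) x * (1 - F x)) \<le> infsetsum (\<lambda>x. pmf (\<rho> n) x * (1 - F x)) UNIV"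
          by (rule fin_le_infsetsum) (use Fb that in auto)
        then show "(\<Sum>x\<in>Fs. pmf (\<rho> n) x * (1 - F x)) \<le> 1 - ?E (\<rho> n)" using onemF by simp
      qed
    qed
    then show ?thesis using infsetsum_le_fin[of UNIV "\<lambda>x. p x * (1 - F x)" "1 - V"] pnn Fb by auto
  qed
  have "?E \<pi> = infsetsum (\<lambda>x. p x * F x) UNIV" by (simp add: pmf_expectation_eq_infsetsum \<pi>(2))
  also have "\<dots> = infsetsum (\<lambda>x. p x - p x * (1 - F x)) UNIV" by (simp add: algebra_simps)
  also have "\<dots> = infsetsum p UNIV - infsetsum (\<lambda>x. p x * (1 - F x)) UNIV"
    by (rule infsetsum_diff) (use whole val in auto)
  finally have "?E \<pi> \<ge> V" using tot val by simp
  then show ?thesis using \<pi>(1) Vge by (auto simp: Cs_def intro: order.trans)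
qed

theorem lemma5p3:
  fixes \<epsilon> \<delta> :: real and k :: nat
    and A :: "'a pmf" and B :: "'b pmf" and f :: "'a \<Rightarrow> 'b \<Rightarrow> real"
  assumes "\<epsilon> > 0" and "\<delta> > 0" and "k \<ge> 1"
    and "\<And>a b. 0 \<le> f a b \<and> f a b \<le> 1"
    and "\<exists>\<mu> :: ((nat \<Rightarrow> 'a) \<times> (nat \<Rightarrow> 'b)) pmf.
           is_coupling \<mu> (Pi_pmf {..<k} undefined (\<lambda>_. A)) (Pi_pmf {..<k} undefined (\<lambda>_. B)) \<and>
           measure_pmf.prob \<mu>
             {(as, bs). (\<Sum>i<k. f (as i) (bs i)) \<ge> \<epsilon> * real k + sqrt (2 * real k * ln (1 / \<delta>))}
             \<ge> \<delta>"
  shows "\<exists>\<nu> :: ('a \<times> 'b) pmf. is_coupling \<nu> A B \<and>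
           measure_pmf.expectation \<nu> (\<lambda>(a, b). f a b) \<ge> \<epsilon>"
proof -
  have Fb: "0 \<le> case_prod f x \<and> case_prod f x \<le> 1" for x using assms(4) by (cases x) auto
  obtain \<pi> where \<pi>: "is_coupling \<pi> A B"
    "\<And>\<nu>. is_coupling \<nu> A B \<Longrightarrow> measure_pmf.expectation \<nu> (case_prod f) \<le> measure_pmf.expectation \<pi> (case_prod f)"
    using opt_exists[of "case_prod f" A B] Fb by blast
  show ?thesis
  proof (cases "measure_pmf.expectation \<pi> (case_prod f) \<ge> \<epsilon>")
    case True
    then show ?thesis using \<pi>(1) by (auto simp: case_prod_unfold)
  next
    case False
    obtain G H c d where GH: "\<And>x y. f x y \<le> G x + H y" "\<And>x. c \<le> G x \<and> G x \<le> c + 1" "\<And>y. d \<le> H y \<and> H y \<le> d + 1"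
      "measure_pmf.expectation A G + measure_pmf.expectation B H \<le> measure_pmf.expectation \<pi> (case_prod f)"
      using duality[OF \<pi>(1) \<pi>(2) assms(4)] by blast
    have lt: "measure_pmf.expectation A G + measure_pmf.expectation B H < \<epsilon>" using GH(4) False by linarith
    obtain \<mu> :: "((nat \<Rightarrow> 'a) \<times> (nat \<Rightarrow> 'b)) pmf" where \<mu>:
      "is_coupling \<mu> (Pi_pmf {..<k} undefined (\<lambda>_. A)) (Pi_pmf {..<k} undefined (\<lambda>_. B))"
      "measure_pmf.prob \<mu> {(as, bs). (\<Sum>i<k. f (as i) (bs i)) \<ge> \<epsilon> * real k + sqrt (2 * real k * ln (1 / \<delta>))} \<ge> \<delta>"
      using assms(5) by blast
    show ?thesis
    proof (cases "\<delta> \<le> 1")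
      case True
      have "measure_pmf.prob \<mu> {(as, bs). (\<Sum>i<k. f (as i) (bs i)) \<ge> \<epsilon> * real k + sqrt (2 * real k * ln (1 / \<delta>))} < \<delta>"
        by (rule subgauss[OF \<mu>(1) assms(3) GH(1) GH(2) GH(3) lt assms(2) True])
      then show ?thesis using \<mu>(2) by linarith
    next
      case False
      have "measure_pmf.prob \<mu> {(as, bs). (\<Sum>i<k. f (as i) (bs i)) \<ge> \<epsilon> * real k + sqrt (2 * real k * ln (1 / \<delta>))} \<le> 1"
        by simp
      then show ?thesis using \<mu>(2) False by linarith
    qed
  qed
qed

end
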